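(* Let $\mathcal{N}$ be any set of arbitrary 2D nodes over an $N\times M$ matrix, and let $B\mapsto S_U(B)$ be any fixed assignment, to each submatrix $B$, of a set $S_U(B)\subseteq\mathcal{N}$ whose union equals $B$. For a submatrix $B$, let the set of nodes visited by the update on $B$ be $S_U(B)\cup\{m\in\mathcal{N}: m\cap n\neq\emptyset \text{ for some } n\in S_U(B),\ \text{and } m\not\subseteq n \text{ for every } n\in S_U(B)\}$. Then there exists a submatrix $B$ for which the update on $B$ visits at least $\frac{NM}{N+M}$ nodes.
   Context: The matrix has coordinate set $G=\{0,\dots,N-1\}\times\{0,\dots,M-1\}$; a submatrix $[x_0,x_1][y_0,y_1]$ is the set of $(x,y)$ with $x_0\le x\le x_1$, $y_0\le y\le y_1$. A set of arbitrary 2D nodes is a family $\mathcal{N}$ of nonempty subsets of $G$ (nodes; they need not be submatrices) such that no two nodes are the same subset and for every coordinate $(x,y)$ the singleton $\{(x,y)\}$ is a node. (In the associated update algorithm, the lazy values of the nodes of $S_U(B)$ are changed and the non-lazy values of the other visited nodes are recomputed.) *)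

theory Defs
  imports Complex_Main
begin

definition grid :: "nat \<Rightarrow> nat \<Rightarrow> (nat \<times> nat) set" where
  "grid N M = {0..<N} \<times> {0..<M}"

definition submatrix :: "nat \<Rightarrow> nat \<Rightarrow> nat \<Rightarrow> nat \<Rightarrow> (nat \<times> nat) set" where
  "submatrix x0 x1 y0 y1 = {(x, y). x0 \<le> x \<and> x \<le> x1 \<and> y0 \<le> y \<and> y \<le> y1}"

definition is_submatrix :: "nat \<Rightarrow> nat \<Rightarrow> (nat \<times> nat) set \<Rightarrow> bool" where
  "is_submatrix N M B \<longleftrightarrow>
     (\<exists>x0 x1 y0 y1. x0 \<le> x1 \<and> x1 < N \<and> y0 \<le> y1 \<and> y1 < M \<and> B = submatrix x0 x1 y0 y1)"

text \<open>A set of arbitrary 2D nodes (distinctness of nodes is automatic for a set of sets).\<close>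
definition node_set :: "nat \<Rightarrow> nat \<Rightarrow> (nat \<times> nat) set set \<Rightarrow> bool" where
  "node_set N M Ns \<longleftrightarrow>
     (\<forall>n\<in>Ns. n \<noteq> {} \<and> n \<subseteq> grid N M) \<and> (\<forall>c\<in>grid N M. {c} \<in> Ns)"

definition visited :: "(nat \<times> nat) set set \<Rightarrow> (nat \<times> nat) set set \<Rightarrow> (nat \<times> nat) set set" where
  "visited Ns S = S \<union> {m \<in> Ns. (\<exists>n\<in>S. m \<inter> n \<noteq> {}) \<and> (\<forall>n\<in>S. \<not> m \<subseteq> n)}"

end

theory Submission
  imports Defs
begin

theorem theorem4:
  fixes N M :: nat
    and Ns :: "(nat \<times> nat) set set"
    and SU :: "(nat \<times> nat) set \<Rightarrow> (nat \<times> nat) set set"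
  assumes "0 < N" and "0 < M"
    and "node_set N M Ns"
    and "\<And>B. is_submatrix N M B \<Longrightarrow> SU B \<subseteq> Ns \<and> \<Union>(SU B) = B"
  shows "\<exists>B. is_submatrix N M B \<and>
           real (card (visited Ns (SU B))) \<ge> real N * real M / (real N + real M)"
proof (rule ccontr)
  assume neg: "\<not> ?thesis"
  define row where "row r = submatrix r r 0 (M - 1)" for r
  define col where "col c = submatrix 0 (N - 1) c c" for c
  have rowS: "is_submatrix N M (row r)" if "r < N" for r
    unfolding is_submatrix_def row_def using that assms(2) by (intro exI[of _ r] exI[of _ r] exI[of _ 0] exI[of _ "M - 1"]) auto
  have colS: "is_submatrix N M (col c)" if "c < M" for c
    unfolding is_submatrix_def col_def using that assms(1) by (intro exI[of _ 0] exI[of _ "N - 1"] exI[of _ c] exI[of _ c]) auto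
  have row_mem: "(a, b) \<in> row r \<longleftrightarrow> a = r \<and> b \<le> M - 1" for a b r
    unfolding row_def submatrix_def by auto
  have col_mem: "(a, b) \<in> col c \<longleftrightarrow> b = c \<and> a \<le> N - 1" for a b c
    unfolding col_def submatrix_def by auto
  have finNs: "finite Ns"
  proof -
    have "Ns \<subseteq> Pow (grid N M)" using assms(3) unfolding node_set_def by auto
    moreover have "finite (grid N M)" unfolding grid_def by auto
    ultimately show ?thesis by (meson finite_Pow_iff finite_subset)
  qed
  define I where "I = Inl ` {..<N} \<union> Inr ` {..<M}"
  define V where "V i = (case i of Inl r \<Rightarrow> visited Ns (SU (row r)) | Inr c \<Rightarrow> visited Ns (SU (col c)))" for i
  have finV: "finite (V i)" if "i \<in> I" for i
  proof -
    have "is_submatrix N M (case i of Inl r \<Rightarrow> row r | Inr c \<Rightarrow> col c)"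
      using that rowS colS unfolding I_def by auto
    then have "SU (case i of Inl r \<Rightarrow> row r | Inr c \<Rightarrow> col c) \<subseteq> Ns" using assms(4) by blast
    then have "V i \<subseteq> Ns" unfolding V_def visited_def by (cases i) auto
    then show ?thesis using finNs finite_subset by blast
  qed
  have finI: "finite I" unfolding I_def by auto
  have cardI: "card I = N + M"
    unfolding I_def by (subst card_Un_disjoint) (auto simp: card_image)
  define k where "k = real N * real M / (real N + real M)"
  have lt: "real (card (V i)) < k" if iI: "i \<in> I" for i
  proof -
    obtain B where "is_submatrix N M B" "V i = visited Ns (SU B)"
      using iI rowS colS unfolding I_def V_def by (auto simp del: One_nat_def) (metis, metis)
    then show ?thesis using neg unfolding k_def by force
  qed
  have "real (card (Sigma I V)) = (\<Sum>i\<in>I. real (card (V i)))"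
    using finI finV by (simp add: card_SigmaI)
  also have "\<dots> < (\<Sum>i\<in>I. k)"
    using finI lt by (intro sum_strict_mono) (use assms in \<open>auto simp: cardI I_def\<close>)
  also have "\<dots> = real N * real M"
    using cardI assms unfolding k_def by (simp add: field_simps)
  finally have A: "real (card (Sigma I V)) < real N * real M" .
  define f where "f p = (case p of (r, c) \<Rightarrow>
     if {(r,c)} \<in> SU (row r) then (Inl r, {(r,c)})
     else (Inr c, SOME n. n \<in> SU (row r) \<and> (r,c) \<in> n))" for p :: "nat \<times> nat"
  have ex_n: "\<exists>n. n \<in> SU (row r) \<and> (r,c) \<in> n" if "r < N" "c < M" for r c
  proof -
    have "(r,c) \<in> row r" using that row_mem by auto
    then show ?thesis using assms(4)[OF rowS[OF that(1)]] by blast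
  qed
  have fin_grid: "finite (grid N M)" unfolding grid_def by auto
  have inj: "inj_on f (grid N M)"
  proof (rule inj_onI)
    fix p q assume p: "p \<in> grid N M" and q: "q \<in> grid N M" and e: "f p = f q"
    obtain r c where pr: "p = (r,c)" by (cases p)
    obtain r' c' where qr: "q = (r',c')" by (cases q)
    have rc: "r < N" "c < M" "r' < N" "c' < M" using p q pr qr unfolding grid_def by auto
    let ?n = "SOME n. n \<in> SU (row r) \<and> (r,c) \<in> n"
    let ?n' = "SOME n. n \<in> SU (row r') \<and> (r',c') \<in> n"
    have n: "?n \<in> SU (row r) \<and> (r,c) \<in> ?n" using someI_ex[OF ex_n[OF rc(1,2)]] .
    have n': "?n' \<in> SU (row r') \<and> (r',c') \<in> ?n'" using someI_ex[OF ex_n[OF rc(3,4)]] .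
    have sub: "?n \<subseteq> row r" using n assms(4)[OF rowS[OF rc(1)]] by blast
    have sub': "?n' \<subseteq> row r'" using n' assms(4)[OF rowS[OF rc(3)]] by blast
    show "p = q"
    proof (cases "{(r,c)} \<in> SU (row r)")
      case True
      then show ?thesis using e pr qr unfolding f_def by (auto split: if_splits)
    next
      case False
      then have "\<not> {(r',c')} \<in> SU (row r')" and "c = c'" and "?n = ?n'"
        using e pr qr unfolding f_def by (auto split: if_splits)
      then have "(r,c) \<in> row r'" using n sub' by auto
      then show ?thesis using pr qr \<open>c = c'\<close> row_mem by auto
    qed
  qed
  have into: "f ` grid N M \<subseteq> Sigma I V"
  proof
    fix x assume "x \<in> f ` grid N M"
    then obtain r c where rc: "r < N" "c < M" and x: "x = f (r,c)" unfolding grid_def by auto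
    let ?n = "SOME n. n \<in> SU (row r) \<and> (r,c) \<in> n"
    have n: "?n \<in> SU (row r) \<and> (r,c) \<in> ?n" using someI_ex[OF ex_n[OF rc(1,2)]] .
    have Sr: "SU (row r) \<subseteq> Ns" "\<Union>(SU (row r)) = row r" using assms(4)[OF rowS[OF rc(1)]] by auto
    have Sc: "SU (col c) \<subseteq> Ns" "\<Union>(SU (col c)) = col c" using assms(4)[OF colS[OF rc(2)]] by auto
    show "x \<in> Sigma I V"
    proof (cases "{(r,c)} \<in> SU (row r)")
      case True
      then show ?thesis using x rc unfolding f_def I_def V_def visited_def by auto
    next
      case False
      have sub: "?n \<subseteq> row r" using n Sr by blast
      have "?n \<noteq> {(r,c)}" using n False by metis
      then obtain y where y: "y \<in> ?n" "y \<noteq> (r,c)" using n by blast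
      obtain c' where yc: "y = (r, c')" "c' \<noteq> c" using y sub row_mem by (cases y) auto
      have "(r,c) \<in> col c" using col_mem rc by auto
      then obtain n1 where n1: "n1 \<in> SU (col c)" "(r,c) \<in> n1" using Sc by blast
      have notsub: "\<not> ?n \<subseteq> n2" if "n2 \<in> SU (col c)" for n2
      proof
        assume "?n \<subseteq> n2"
        then have "(r,c') \<in> col c" using that Sc y yc by blast
        then show False using col_mem yc by auto
      qed
      have "?n \<in> visited Ns (SU (col c))"
        unfolding visited_def using n Sr n1 notsub by blast
      then show ?thesis using x rc False unfolding f_def I_def V_def by auto
    qed
  qed
  have "card (grid N M) \<le> card (Sigma I V)"
    using card_inj_on_le[OF inj into] finI finV by (simp add: finite_SigmaI)
  moreover have "card (grid N M) = N * M" unfolding grid_def by simp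
  ultimately show False using A by (metis of_nat_le_iff of_nat_mult not_less)
qed

end
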